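(* Let $X$ be an ultradiscrete ballean and $n\ge2$. Then the $n$-th power $X^n$ is not normal, but the hypersymmetric power $[X]^{\le n}$ is normal.
   Context: A ballean is a pair $(X,\mathcal E_X)$ where $X$ is a set and $\mathcal E_X$ is a family of subsets of $X\times X$ (entourages) such that: each $E\in\mathcal E_X$ contains the diagonal $\Delta_X$; for any $E,F\in\mathcal E_X$ there is $D\in\mathcal E_X$ with $E\circ F^{-1}\subset D$; and $\bigcup\mathcal E_X=X\times X$. For $E\in\mathcal E_X$, $x\in X$, $A\subset X$: $E[x]=\{y:(x,y)\in E\}$, $E[A]=\bigcup_{a\in A}E[a]$. $B\subset X$ is bounded if $B\subset E[x]$ for some $E\in\mathcal E_X$, $x\in X$; $\mathcal B_X$ is the family of bounded sets. Sets $A,B$ are asymptotically disjoint if $E[A]\cap E[B]\in\mathcal B_X$ for all $E\in\mathcal E_X$; $U$ is an asymptotic neighborhood of $A$ if $E[A]\setminus U\in\mathcal B_X$ for all $E$; $X$ is normal if any two asymptotically disjoint sets have disjoint asymptotic neighborhoods, and ultranormal if it contains no two unbounded asymptotically disjoint sets. $X$ is discrete if $X$ is unbounded and for every $E\in\mathcal E_X$ there is a bounded $B_E$ with $E[x]=\{x\}$ for $x\in X\setminus B_E$; ultradiscrete = discrete and ultranormal. The power $X^n$ has entourages $\{(x,y)\in X^n\times X^n:(x(i),y(i))\in E_i\ \forall i\}$ with $E_i\in\mathcal E_X$. The hyperballean $[X]^{\mathcal B}$ is the set $\mathcal B_X\setminus\{\emptyset\}$ with entourages $\hat E=\{(A,B):A\subset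 E[B],\ B\subset E[A]\}$, $E\in\mathcal E_X$; the hypersymmetric power $[X]^{\le n}$ is its subballean $\{A\in[X]^{\mathcal B}:|A|\le n\}$ (a subballean of $(Z,\mathcal E_Z)$ on $Y\subset Z$ has entourages $(Y\times Y)\cap E$, $E\in\mathcal E_Z$). *)

theory Defs
  imports Main "HOL-Library.FuncSet"
begin

definition ballean :: "'a set \<Rightarrow> ('a \<times> 'a) set set \<Rightarrow> bool" where
  "ballean X EE \<longleftrightarrow>
     (\<forall>E\<in>EE. Id_on X \<subseteq> E \<and> E \<subseteq> X \<times> X) \<and>
     (\<forall>E\<in>EE. \<forall>F\<in>EE. \<exists>D\<in>EE. E O converse F \<subseteq> D) \<and>
     \<Union>EE = X \<times> X"

definition bounded_in :: "'a set \<Rightarrow> ('a \<times> 'a) set set \<Rightarrow> 'a set \<Rightarrow> bool" where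
  "bounded_in X EE B \<longleftrightarrow> (\<exists>E\<in>EE. \<exists>x\<in>X. B \<subseteq> E `` {x})"

definition asymp_disjoint :: "'a set \<Rightarrow> ('a \<times> 'a) set set \<Rightarrow> 'a set \<Rightarrow> 'a set \<Rightarrow> bool" where
  "asymp_disjoint X EE A B \<longleftrightarrow> (\<forall>E\<in>EE. bounded_in X EE (E `` A \<inter> E `` B))"

definition asymp_nbhd :: "'a set \<Rightarrow> ('a \<times> 'a) set set \<Rightarrow> 'a set \<Rightarrow> 'a set \<Rightarrow> bool" where
  "asymp_nbhd X EE U A \<longleftrightarrow> (\<forall>E\<in>EE. bounded_in X EE (E `` A - U))"

definition normal_ballean :: "'a set \<Rightarrow> ('a \<times> 'a) set set \<Rightarrow> bool" where
  "normal_ballean X EE \<longleftrightarrow>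
     (\<forall>A B. A \<subseteq> X \<longrightarrow> B \<subseteq> X \<longrightarrow> asymp_disjoint X EE A B \<longrightarrow>
        (\<exists>U V. U \<subseteq> X \<and> V \<subseteq> X \<and> asymp_nbhd X EE U A \<and> asymp_nbhd X EE V B \<and> U \<inter> V = {}))"

definition ultranormal :: "'a set \<Rightarrow> ('a \<times> 'a) set set \<Rightarrow> bool" where
  "ultranormal X EE \<longleftrightarrow>
     \<not> (\<exists>A B. A \<subseteq> X \<and> B \<subseteq> X \<and> \<not> bounded_in X EE A \<and> \<not> bounded_in X EE B \<and>
            asymp_disjoint X EE A B)"

definition discrete_ballean :: "'a set \<Rightarrow> ('a \<times> 'a) set set \<Rightarrow> bool" where
  "discrete_ballean X EE \<longleftrightarrow> \<not> bounded_in X EE X \<and>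
     (\<forall>E\<in>EE. \<exists>B. bounded_in X EE B \<and> (\<forall>x\<in>X - B. E `` {x} = {x}))"

definition ultradiscrete :: "'a set \<Rightarrow> ('a \<times> 'a) set set \<Rightarrow> bool" where
  "ultradiscrete X EE \<longleftrightarrow> discrete_ballean X EE \<and> ultranormal X EE"

definition power_carrier :: "'a set \<Rightarrow> nat \<Rightarrow> (nat \<Rightarrow> 'a) set" where
  "power_carrier X n = PiE {..<n} (\<lambda>_. X)"

definition power_ent :: "'a set \<Rightarrow> ('a \<times> 'a) set set \<Rightarrow> nat \<Rightarrow> ((nat \<Rightarrow> 'a) \<times> (nat \<Rightarrow> 'a)) set set" where
  "power_ent X EE n =
     {{(x, y). x \<in> power_carrier X n \<and> y \<in> power_carrier X n \<and> (\<forall>i<n. (x i, y i) \<in> Es i)}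
       | Es. \<forall>i<n. Es i \<in> EE}"

definition hyper_carrier :: "'a set \<Rightarrow> ('a \<times> 'a) set set \<Rightarrow> 'a set set" where
  "hyper_carrier X EE = {A. bounded_in X EE A \<and> A \<noteq> {}}"

definition hyper_ent :: "'a set \<Rightarrow> ('a \<times> 'a) set set \<Rightarrow> ('a set \<times> 'a set) set set" where
  "hyper_ent X EE =
     (\<lambda>E. {(A, B). A \<in> hyper_carrier X EE \<and> B \<in> hyper_carrier X EE \<and>
                   A \<subseteq> E `` B \<and> B \<subseteq> E `` A}) ` EE"

definition sub_ent :: "'b set \<Rightarrow> ('b \<times> 'b) set set \<Rightarrow> ('b \<times> 'b) set set" where
  "sub_ent Y EE = (\<lambda>E. (Y \<times> Y) \<inter> E) ` EE"

definition hypersym_carrier :: "'a set \<Rightarrow> ('a \<times> 'a) set set \<Rightarrow> nat \<Rightarrow> 'a set set" where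
  "hypersym_carrier X EE n = {A \<in> hyper_carrier X EE. finite A \<and> card A \<le> n}"

definition hypersym_ent :: "'a set \<Rightarrow> ('a \<times> 'a) set set \<Rightarrow> nat \<Rightarrow> ('a set \<times> 'a set) set set" where
  "hypersym_ent X EE n = sub_ent (hypersym_carrier X EE n) (hyper_ent X EE)"

end

theory Submission
  imports Defs
begin


definition goodc :: "('a \<Rightarrow> 'a) \<Rightarrow> ('a \<times> nat) set \<Rightarrow> bool" where
  "goodc g R \<longleftrightarrow> (\<forall>x i j. (x,i)\<in>R \<longrightarrow> (x,j)\<in>R \<longrightarrow> i = j) \<and> (\<forall>x i. (x,i)\<in>R \<longrightarrow> i < 3)
     \<and> (\<forall>x i. (x,i)\<in>R \<longrightarrow> g x \<in> Domain R) \<and> (\<forall>x i j. (x,i)\<in>R \<longrightarrow> (g x,j)\<in>R \<longrightarrow> i \<noteq> j)"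

lemma goodc_chain:
  assumes "C \<in> chains {R. goodc g R}"
  shows "goodc g (\<Union>C)"
proof -
  have cmp: "\<And>R1 R2. R1 \<in> C \<Longrightarrow> R2 \<in> C \<Longrightarrow> R1 \<subseteq> R2 \<or> R2 \<subseteq> R1" using chainsD[OF assms] by blast
  have gd: "\<And>R. R \<in> C \<Longrightarrow> goodc g R" using chainsD2[OF assms] by blast
  show ?thesis unfolding goodc_def
  proof (intro conjI allI impI)
    fix x i j assume a: "(x,i) \<in> \<Union>C" "(x,j) \<in> \<Union>C"
    then obtain R1 R2 where r: "R1\<in>C" "R2\<in>C" "(x,i)\<in>R1" "(x,j)\<in>R2" by blast
    show "i = j"
    proof (cases "R1 \<subseteq> R2")
      case True thus ?thesis using gd[OF r(2)] r unfolding goodc_def by blast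
    next
      case False hence "R2 \<subseteq> R1" using cmp r by blast
      thus ?thesis using gd[OF r(1)] r unfolding goodc_def by blast
    qed
  next
    fix x i assume "(x,i) \<in> \<Union>C" thus "i < 3" using gd unfolding goodc_def by blast
  next
    fix x i assume "(x,i) \<in> \<Union>C"
    then obtain R where "R\<in>C" "(x,i)\<in>R" by blast
    then obtain j where "(g x, j) \<in> R" using gd unfolding goodc_def by blast
    thus "g x \<in> Domain (\<Union>C)" using \<open>R\<in>C\<close> by blast
  next
    fix x i j assume a: "(x,i) \<in> \<Union>C" "(g x,j) \<in> \<Union>C"
    then obtain R1 R2 where r: "R1\<in>C" "R2\<in>C" "(x,i)\<in>R1" "(g x,j)\<in>R2" by blast
    show "i \<noteq> j"
    proof (cases "R1 \<subseteq> R2")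
      case True thus ?thesis using gd[OF r(2)] r unfolding goodc_def by blast
    next
      case False hence "R2 \<subseteq> R1" using cmp r by blast
      thus ?thesis using gd[OF r(1)] r unfolding goodc_def by blast
    qed
  qed
qed

lemma goodc_union:
  assumes "goodc g R" "goodc g S" "Domain R \<inter> Domain S = {}"
  shows "goodc g (R \<union> S)"
proof -
  have dR: "\<And>x i. (x,i)\<in>R \<Longrightarrow> g x \<in> Domain R" and dS: "\<And>x i. (x,i)\<in>S \<Longrightarrow> g x \<in> Domain S"
    using assms unfolding goodc_def by blast+
  show ?thesis unfolding goodc_def
  proof (intro conjI allI impI)
    fix x i j assume a: "(x,i) \<in> R \<union> S" "(x,j) \<in> R \<union> S"
    hence "((x,i)\<in>R \<and> (x,j)\<in>R) \<or> ((x,i)\<in>S \<and> (x,j)\<in>S)" using assms(3) by blast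
    thus "i = j" using assms(1,2) unfolding goodc_def by blast
  next
    fix x i assume "(x,i) \<in> R \<union> S" thus "i < 3" using assms unfolding goodc_def by blast
  next
    fix x i assume "(x,i) \<in> R \<union> S" thus "g x \<in> Domain (R \<union> S)" using dR dS by blast
  next
    fix x i j assume a: "(x,i) \<in> R \<union> S" "(g x,j) \<in> R \<union> S"
    show "i \<noteq> j"
    proof (cases "(x,i) \<in> R")
      case True
      hence "g x \<in> Domain R" using dR by blast
      hence "(g x, j) \<in> R" using a assms(3) by blast
      thus ?thesis using True assms(1) unfolding goodc_def by blast
    next
      case False
      hence xs: "(x,i) \<in> S" using a by blast
      hence "g x \<in> Domain S" using dS by blast
      hence "(g x, j) \<in> S" using a assms(3) by blast
      thus ?thesis using xs assms(2) unfolding goodc_def by blast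
    qed
  qed
qed

lemma three_colour:
  fixes g :: "'a \<Rightarrow> 'a"
  assumes fp: "\<And>x. g x \<noteq> x"
  shows "\<exists>c::'a \<Rightarrow> nat. (\<forall>x. c x < 3) \<and> (\<forall>x. c (g x) \<noteq> c x)"
proof -
  have "\<forall>C\<in>chains {R. goodc g R}. \<Union>C \<in> {R. goodc g R}" using goodc_chain by blast
  from Zorn_Lemma[OF this] obtain M where M: "goodc g M"
    and mx: "\<And>R. goodc g R \<Longrightarrow> M \<subseteq> R \<Longrightarrow> R = M" by blast
  have dom: "Domain M = UNIV"
  proof (rule ccontr)
    assume "Domain M \<noteq> UNIV"
    then obtain x0 where x0: "x0 \<notin> Domain M" by blast
    show False
    proof (cases "\<exists>x. x \<notin> Domain M \<and> g x \<in> Domain M")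
      case True
      then obtain x j where x: "x \<notin> Domain M" "(g x, j) \<in> M" by blast
      define k where "k = (if j = 0 then 1 else (0::nat))"
      have "goodc g (insert (x,k) M)" unfolding goodc_def
      proof (intro conjI allI impI)
        fix y i i' assume "(y,i) \<in> insert (x,k) M" "(y,i') \<in> insert (x,k) M"
        thus "i = i'" using M x unfolding goodc_def by blast
      next
        fix y i assume "(y,i) \<in> insert (x,k) M" thus "i < 3" using M unfolding goodc_def k_def by auto
      next
        fix y i assume "(y,i) \<in> insert (x,k) M" thus "g y \<in> Domain (insert (x,k) M)"
          using M x unfolding goodc_def by blast
      next
        fix y i i' assume a: "(y,i) \<in> insert (x,k) M" "(g y,i') \<in> insert (x,k) M"
        show "i \<noteq> i'"
        proof (cases "(y,i) = (x,k)")
          case True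
          hence "(g x, i') \<in> M" using a fp[of x] by auto
          hence "i' = j" using x M unfolding goodc_def by blast
          thus ?thesis using True k_def by auto
        next
          case False
          hence yM: "(y,i) \<in> M" using a by blast
          hence "g y \<in> Domain M" using M unfolding goodc_def by blast
          hence "(g y, i') \<in> M" using a x by auto
          thus ?thesis using yM M unfolding goodc_def by blast
        qed
      qed
      hence "insert (x,k) M = M" using mx by blast
      thus False using x by blast
    next
      case False
      hence clo: "\<And>x. x \<notin> Domain M \<Longrightarrow> g x \<notin> Domain M" by blast
      define f where "f = (\<lambda>k. (g^^k) x0)"
      have fD: "\<And>k. f k \<notin> Domain M"
      proof -
        fix k show "f k \<notin> Domain M" by (induction k) (auto simp: f_def x0 clo)
      qed
      have fS: "\<And>k. g (f k) = f (Suc k)" by (simp add: f_def)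
      obtain S where S: "goodc g S" "S \<noteq> {}" "Domain S \<subseteq> - Domain M"
      proof (cases "inj f")
        case True
        define S where "S = (\<lambda>k. (f k, k mod 2)) ` UNIV"
        have "goodc g S" unfolding goodc_def S_def
        proof (intro conjI allI impI)
          fix y i j assume "(y,i) \<in> range (\<lambda>k. (f k, k mod 2))" "(y,j) \<in> range (\<lambda>k. (f k, k mod 2))"
          thus "i = j" using True by (auto dest: injD)
        next
          fix y i assume "(y,i) \<in> range (\<lambda>k. (f k, k mod 2))" thus "i < 3" by auto
        next
          fix y i assume "(y,i) \<in> range (\<lambda>k. (f k, k mod 2))"
          then obtain k where "y = f k" by auto
          hence "g y = f (Suc k)" using fS by simp
          thus "g y \<in> Domain (range (\<lambda>k. (f k, k mod 2)))" by (auto intro: Domain.intros)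
        next
          fix y i j assume a: "(y,i) \<in> range (\<lambda>k. (f k, k mod 2))" "(g y,j) \<in> range (\<lambda>k. (f k, k mod 2))"
          then obtain k k' where kk: "y = f k" "i = k mod 2" "g y = f k'" "j = k' mod 2" by auto
          hence "f (Suc k) = f k'" using fS by simp
          hence "k' = Suc k" using True by (auto dest: injD)
          thus "i \<noteq> j" using kk by (simp add: mod_Suc)
        qed
        moreover have "Domain S \<subseteq> - Domain M" using fD unfolding S_def by auto
        ultimately show ?thesis using that unfolding S_def by blast
      next
        case False
        then obtain a b where ab: "a < b" "f a = f b"
          unfolding inj_def by (metis linorder_neqE_nat)
        define y where "y = f a"
        have "(g^^(b-a)) y = y" using ab unfolding y_def f_def
          by (metis funpow_add le_add_diff_inverse2 less_imp_le_nat comp_apply)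
        hence ex: "\<exists>l. 0 < l \<and> (g^^l) y = y" using ab by (intro exI[of _ "b-a"]) auto
        define l where "l = (LEAST l. 0 < l \<and> (g^^l) y = y)"
        have l: "0 < l" "(g^^l) y = y" using LeastI_ex[OF ex] unfolding l_def by auto
        have lmin: "\<And>m. 0 < m \<Longrightarrow> m < l \<Longrightarrow> (g^^m) y \<noteq> y"
          using not_less_Least unfolding l_def by blast
        have "l \<noteq> 1" using l fp[of y] by auto
        hence l2: "2 \<le> l" using l by auto
        define q where "q = (\<lambda>k. (g^^k) y)"
        have qD: "\<And>k. q k \<notin> Domain M"
        proof -
          fix k have "q k = f (k + a)" unfolding q_def y_def f_def by (simp add: funpow_add)
          thus "q k \<notin> Domain M" using fD by simp
        qed
        have qlt: "\<And>u v. u < l \<Longrightarrow> v < l \<Longrightarrow> q u = q v \<Longrightarrow> u < v \<Longrightarrow> False"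
        proof -
          fix u v assume uv: "u < l" "v < l" "q u = q v" "u < v"
          have "(g^^(l - v + u)) y = (g^^(l-v)) (q u)" unfolding q_def by (simp add: funpow_add)
          also have "\<dots> = (g^^(l-v)) (q v)" using uv by simp
          also have "\<dots> = (g^^(l - v + v)) y" unfolding q_def by (simp add: funpow_add)
          also have "l - v + v = l" using uv by simp
          finally have "(g^^(l - v + u)) y = y" using l by simp
          moreover have "0 < l - v + u" "l - v + u < l" using uv by auto
          ultimately show False using lmin[of "l - v + u"] by simp
        qed
        have qinj: "\<And>u v. u < l \<Longrightarrow> v < l \<Longrightarrow> q u = q v \<Longrightarrow> u = v"
        proof -
          fix u v assume uv: "u < l" "v < l" "q u = q v"
          show "u = v"
          proof (cases u v rule: linorder_cases)
            case less thus ?thesis using qlt uv by blast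
          next
            case greater thus ?thesis using qlt[of v u] uv by simp
          qed
        qed
        have qS: "\<And>k. k < l \<Longrightarrow> g (q k) = (if Suc k = l then q 0 else q (Suc k))"
          using l unfolding q_def by auto
        define col where "col = (\<lambda>k. if k = l - 1 \<and> odd l then 2 else k mod (2::nat))"
        define S where "S = (\<lambda>k. (q k, col k)) ` {..<l}"
        have "goodc g S" unfolding goodc_def S_def
        proof (intro conjI allI impI)
          fix z i j assume "(z,i) \<in> (\<lambda>k. (q k, col k)) ` {..<l}" "(z,j) \<in> (\<lambda>k. (q k, col k)) ` {..<l}"
          thus "i = j" using qinj by auto
        next
          fix z i assume "(z,i) \<in> (\<lambda>k. (q k, col k)) ` {..<l}" thus "i < 3" by (auto simp: col_def)
        next
          fix z i assume "(z,i) \<in> (\<lambda>k. (q k, col k)) ` {..<l}"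
          then obtain k where k: "k < l" "z = q k" by auto
          show "g z \<in> Domain ((\<lambda>k. (q k, col k)) ` {..<l})"
          proof (cases "Suc k = l")
            case True thus ?thesis using k qS l by (auto intro!: Domain.intros image_eqI[of _ _ 0])
          next
            case False thus ?thesis using k qS by (auto intro!: Domain.intros image_eqI[of _ _ "Suc k"])
          qed
        next
          fix z i j assume a: "(z,i) \<in> (\<lambda>k. (q k, col k)) ` {..<l}" "(g z,j) \<in> (\<lambda>k. (q k, col k)) ` {..<l}"
          then obtain k k' where kk: "k < l" "z = q k" "i = col k" "k' < l" "g z = q k'" "j = col k'" by auto
          show "i \<noteq> j"
          proof (cases "Suc k = l")
            case True
            hence "q k' = q 0" using kk qS by simp
            hence "k' = 0" using qinj kk l by blast
            thus ?thesis using kk True l2 by (auto simp: col_def odd_iff_mod_2_eq_one)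
          next
            case False
            hence "q k' = q (Suc k)" using kk qS by simp
            hence "k' = Suc k" using qinj kk False by (metis Suc_lessI)
            thus ?thesis using kk False l2 by (auto simp: col_def mod_Suc split: if_splits)
          qed
        qed
        moreover have "Domain S \<subseteq> - Domain M" using qD unfolding S_def by auto
        moreover have "S \<noteq> {}" using l unfolding S_def by auto
        ultimately show ?thesis using that by blast
      qed
      have "goodc g (M \<union> S)" using goodc_union[OF M S(1)] S(3) by blast
      hence "M \<union> S = M" using mx by blast
      hence "S \<subseteq> M" by blast
      moreover obtain p where "p \<in> S" using S(2) by blast
      ultimately show False using S(3) by (metis Domain.DomainI ComplD subsetD surj_pair)
    qed
  qed
  define c where "c = (\<lambda>x. THE i. (x,i) \<in> M)"
  have cM: "\<And>x. (x, c x) \<in> M"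
  proof -
    fix x obtain i where i: "(x,i) \<in> M" using dom by blast
    hence "c x = i" unfolding c_def using M unfolding goodc_def by (intro the_equality) blast+
    thus "(x, c x) \<in> M" using i by simp
  qed
  show ?thesis
  proof (intro exI conjI allI)
    fix x show "c x < 3" using cM M unfolding goodc_def by blast
  next
    fix x show "c (g x) \<noteq> c x" using cM[of x] cM[of "g x"] M unfolding goodc_def by metis
  qed
qed



lemma bl_sub: "ballean X EE \<Longrightarrow> E \<in> EE \<Longrightarrow> E \<subseteq> X \<times> X"
  unfolding ballean_def by blast
lemma bl_refl: "ballean X EE \<Longrightarrow> E \<in> EE \<Longrightarrow> x \<in> X \<Longrightarrow> (x,x) \<in> E"
  unfolding ballean_def by blast
lemma bl_ax: "ballean X EE \<Longrightarrow> E \<in> EE \<Longrightarrow> F \<in> EE \<Longrightarrow> \<exists>D\<in>EE. E O converse F \<subseteq> D"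
  unfolding ballean_def by blast
lemma bl_cover: "ballean X EE \<Longrightarrow> x \<in> X \<Longrightarrow> y \<in> X \<Longrightarrow> \<exists>E\<in>EE. (x,y) \<in> E"
  unfolding ballean_def by blast
lemma bl_conv: assumes b: "ballean X EE" and E: "E \<in> EE" shows "\<exists>D\<in>EE. converse E \<subseteq> D"
proof -
  obtain D where D: "D\<in>EE" "E O converse E \<subseteq> D" using bl_ax[OF b E E] by blast
  have "converse E \<subseteq> E O converse E"
  proof
    fix p assume p: "p \<in> converse E"
    obtain a c where pe: "p = (a,c)" by (cases p)
    hence "(c,a) \<in> E" using p by simp
    hence "a \<in> X" using bl_sub[OF b E] by blast
    hence "(a,a) \<in> E" using bl_refl[OF b E] by blast
    thus "p \<in> E O converse E" using pe p by blast
  qed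
  thus ?thesis using D by blast
qed
lemma bl_comp: assumes b: "ballean X EE" and E: "E \<in> EE" and F: "F \<in> EE" shows "\<exists>D\<in>EE. E O F \<subseteq> D"
proof -
  obtain G where G: "G\<in>EE" "converse F \<subseteq> G" using bl_conv[OF b F] by blast
  obtain D where D: "D\<in>EE" "E O converse G \<subseteq> D" using bl_ax[OF b E G(1)] by blast
  have "F \<subseteq> converse G" using G(2) by auto
  hence "E O F \<subseteq> E O converse G" by blast
  thus ?thesis using D by blast
qed
lemma bl_un: assumes b: "ballean X EE" and E: "E \<in> EE" and F: "F \<in> EE" shows "\<exists>D\<in>EE. E \<union> F \<subseteq> D"
proof -
  obtain D where D: "D\<in>EE" "E O F \<subseteq> D" using bl_comp[OF b E F] by blast
  have "E \<subseteq> E O F"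
  proof
    fix p assume p: "p \<in> E" obtain a c where pe: "p = (a,c)" by (cases p)
    hence "c \<in> X" using p bl_sub[OF b E] by blast
    hence "(c,c) \<in> F" using bl_refl[OF b F] by blast
    thus "p \<in> E O F" using p pe by blast
  qed
  moreover have "F \<subseteq> E O F"
  proof
    fix p assume p: "p \<in> F" obtain a c where pe: "p = (a,c)" by (cases p)
    hence "a \<in> X" using p bl_sub[OF b F] by blast
    hence "(a,a) \<in> E" using bl_refl[OF b E] by blast
    thus "p \<in> E O F" using p pe by blast
  qed
  ultimately show ?thesis using D by blast
qed

abbreviation bnd where "bnd X EE B \<equiv> bounded_in X EE B"

lemma bnd_X: "ballean X EE \<Longrightarrow> bnd X EE B \<Longrightarrow> B \<subseteq> X"
proof -
  assume b: "ballean X EE" and B: "bnd X EE B"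
  then obtain E x where "E\<in>EE" "B \<subseteq> E``{x}" unfolding bounded_in_def by blast
  thus "B \<subseteq> X" using bl_sub[OF b] by blast
qed
lemma bnd_mono: "bnd X EE B \<Longrightarrow> B' \<subseteq> B \<Longrightarrow> bnd X EE B'"
  unfolding bounded_in_def by blast
lemma bnd_single: assumes b: "ballean X EE" and x: "x \<in> X" shows "bnd X EE {x}"
proof -
  obtain E where E: "E\<in>EE" "(x,x)\<in>E" using bl_cover[OF b x x] by blast
  hence "{x} \<subseteq> E``{x}" by blast
  thus ?thesis unfolding bounded_in_def using x E(1) by blast
qed
lemma bnd_empty: "ballean X EE \<Longrightarrow> x \<in> X \<Longrightarrow> bnd X EE {}"
  by (rule bnd_mono[OF bnd_single]) auto
lemma bnd_image: assumes b: "ballean X EE" and A: "bnd X EE A" and E: "E \<in> EE" shows "bnd X EE (E `` A)"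
proof -
  obtain F x where F: "F\<in>EE" "x\<in>X" "A \<subseteq> F``{x}" using A unfolding bounded_in_def by blast
  obtain D where D: "D\<in>EE" "F O E \<subseteq> D" using bl_comp[OF b F(1) E] by blast
  have "E``A \<subseteq> D``{x}"
  proof
    fix z assume "z \<in> E``A" then obtain a where "a \<in> A" "(a,z) \<in> E" by blast
    hence "(x,a) \<in> F" "(a,z) \<in> E" using F(3) by blast+
    hence "(x,z) \<in> F O E" by blast
    thus "z \<in> D``{x}" using D(2) by blast
  qed
  thus ?thesis unfolding bounded_in_def using D F by blast
qed
lemma bnd_Un: assumes b: "ballean X EE" and A: "bnd X EE A" and B: "bnd X EE B" shows "bnd X EE (A \<union> B)"
proof -
  obtain E x where E: "E\<in>EE" "x\<in>X" "A \<subseteq> E``{x}" using A unfolding bounded_in_def by blast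
  obtain F y where F: "F\<in>EE" "y\<in>X" "B \<subseteq> F``{y}" using B unfolding bounded_in_def by blast
  obtain G where G: "G\<in>EE" "(x,y)\<in>G" using bl_cover[OF b E(2) F(2)] by blast
  obtain D1 where D1: "D1\<in>EE" "G O F \<subseteq> D1" using bl_comp[OF b G(1) F(1)] by blast
  obtain D where D: "D\<in>EE" "E \<union> D1 \<subseteq> D" using bl_un[OF b E(1) D1(1)] by blast
  have "A \<union> B \<subseteq> D``{x}"
  proof
    fix z assume "z \<in> A \<union> B"
    thus "z \<in> D``{x}"
    proof
      assume "z \<in> A" hence "(x,z) \<in> E" using E(3) by blast
      thus ?thesis using D(2) by blast
    next
      assume "z \<in> B" hence "(y,z) \<in> F" using F(3) by blast
      hence "(x,z) \<in> G O F" using G(2) by blast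
      thus ?thesis using D1(2) D(2) by blast
    qed
  qed
  thus ?thesis unfolding bounded_in_def using D E by blast
qed
lemma bnd_ent: assumes b: "ballean X EE" and K: "bnd X EE K" shows "\<exists>E\<in>EE. Id_on X \<union> K \<times> K \<subseteq> E"
proof -
  obtain F x where F: "F\<in>EE" "x\<in>X" "K \<subseteq> F``{x}" using K unfolding bounded_in_def by blast
  obtain G where G: "G\<in>EE" "converse F \<subseteq> G" using bl_conv[OF b F(1)] by blast
  obtain D where D: "D\<in>EE" "G O F \<subseteq> D" using bl_comp[OF b G(1) F(1)] by blast
  have "K \<times> K \<subseteq> D"
  proof
    fix p assume "p \<in> K \<times> K"
    then obtain u v where uv: "p = (u,v)" "u \<in> K" "v \<in> K" by blast
    hence "(x,u) \<in> F" "(x,v) \<in> F" using F(3) by blast+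
    hence "(u,x) \<in> G" "(x,v) \<in> F" using G(2) by blast+
    hence "(u,v) \<in> G O F" by blast
    thus "p \<in> D" using D(2) uv by blast
  qed
  moreover have "Id_on X \<subseteq> D" using bl_refl[OF b D(1)] by blast
  ultimately show ?thesis using D(1) by blast
qed
lemma bnd_UN: assumes b: "ballean X EE" and x: "x \<in> X" and J: "finite J" and f: "\<And>i. i \<in> J \<Longrightarrow> bnd X EE (f i)"
  shows "bnd X EE (\<Union>i\<in>J. f i)"
  using J f
proof (induction J rule: finite_induct)
  case empty thus ?case using bnd_empty[OF b x] by simp
next
  case (insert j J) thus ?case using bnd_Un[OF b] by simp
qed
lemma bnd_finite: assumes b: "ballean X EE" and x: "x \<in> X" and F: "finite F" "F \<subseteq> X" shows "bnd X EE F"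
proof -
  have "F = (\<Union>y\<in>F. {y})" by blast
  moreover have "bnd X EE (\<Union>y\<in>F. {y})"
    by (rule bnd_UN[OF b x F(1)]) (rule bnd_single[OF b], use F(2) in blast)
  ultimately show ?thesis by simp
qed

section \<open>Ultradiscrete consequences\<close>

lemma ud_nonempty: assumes b: "ballean X EE" and u: "ultradiscrete X EE" shows "X \<noteq> {}"
proof
  assume X: "X = {}"
  have nb: "\<And>B. \<not> bnd X EE B" unfolding bounded_in_def X by blast
  show False
  proof (cases "EE = {}")
    case True
    hence "asymp_disjoint X EE {} {}" unfolding asymp_disjoint_def by blast
    thus False using u nb unfolding ultradiscrete_def ultranormal_def by blast
  next
    case False
    then obtain E where "E \<in> EE" by blast
    thus False using u nb unfolding ultradiscrete_def discrete_ballean_def by blast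
  qed
qed
lemma ud_notX: "ultradiscrete X EE \<Longrightarrow> \<not> bnd X EE X"
  unfolding ultradiscrete_def discrete_ballean_def by blast
lemma ud_ent: assumes b: "ballean X EE" and u: "ultradiscrete X EE" and E: "E \<in> EE"
  shows "\<exists>K. bnd X EE K \<and> E \<subseteq> Id_on X \<union> K \<times> K"
proof -
  obtain B where B: "bnd X EE B" "\<forall>x\<in>X - B. E``{x} = {x}"
    using u E unfolding ultradiscrete_def discrete_ballean_def by blast
  define K where "K = B \<union> E``B"
  have "bnd X EE K" unfolding K_def using bnd_Un[OF b B(1) bnd_image[OF b B(1) E]] .
  moreover have "E \<subseteq> Id_on X \<union> K \<times> K"
  proof
    fix p assume p: "p \<in> E" obtain x y where pe: "p = (x,y)" by (cases p)
    have xy: "x \<in> X" "y \<in> X" using p pe bl_sub[OF b E] by auto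
    show "p \<in> Id_on X \<union> K \<times> K"
    proof (cases "x \<in> B")
      case True thus ?thesis using p pe unfolding K_def by blast
    next
      case False hence "E``{x} = {x}" using B(2) xy by blast
      hence "y = x" using p pe by blast
      thus ?thesis using pe xy by blast
    qed
  qed
  ultimately show ?thesis by blast
qed
lemma ud_max: assumes b: "ballean X EE" and u: "ultradiscrete X EE" and A: "A \<subseteq> X"
  shows "bnd X EE A \<or> bnd X EE (X - A)"
proof (rule ccontr)
  assume n: "\<not> (bnd X EE A \<or> bnd X EE (X - A))"
  have "asymp_disjoint X EE A (X - A)" unfolding asymp_disjoint_def
  proof
    fix E assume E: "E \<in> EE"
    obtain K where K: "bnd X EE K" "E \<subseteq> Id_on X \<union> K \<times> K" using ud_ent[OF b u E] by blast
    have "E``A \<inter> E``(X - A) \<subseteq> K" using K(2) by blast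
    thus "bnd X EE (E``A \<inter> E``(X - A))" using bnd_mono K(1) by blast
  qed
  thus False using n A u unfolding ultradiscrete_def ultranormal_def by blast
qed
lemma ud_compl: "ballean X EE \<Longrightarrow> ultradiscrete X EE \<Longrightarrow> Z \<subseteq> X \<Longrightarrow> \<not> bnd X EE Z \<Longrightarrow> bnd X EE (X - Z)"
  using ud_max by blast

lemma katetov:
  assumes b: "ballean X EE" and u: "ultradiscrete X EE" and W: "W \<subseteq> X" "\<not> bnd X EE W"
    and h: "\<And>x. x \<in> W \<Longrightarrow> h x \<in> X \<and> h x \<noteq> x"
  shows "\<exists>Z\<subseteq>W. \<not> bnd X EE Z \<and> bnd X EE (h ` Z)"
proof -
  obtain x1 where x1: "x1 \<in> X" using ud_nonempty[OF b u] by blast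
  obtain x2 where x2: "x2 \<in> X" "x2 \<noteq> x1"
  proof (rule ccontr)
    assume "\<not> thesis" hence "X \<subseteq> {x1}" using that by blast
    thus False using ud_notX[OF u] bnd_single[OF b x1] bnd_mono by blast
  qed
  define g where "g = (\<lambda>x. if x \<in> W then h x else if x = x1 then x2 else x1)"
  have "\<And>x. g x \<noteq> x" unfolding g_def using h x2 by auto
  then obtain c :: "'a \<Rightarrow> nat" where c: "\<And>x. c x < 3" "\<And>x. c (g x) \<noteq> c x" using three_colour by blast
  define Z where "Z = (\<lambda>i. {x\<in>W. c x = i})"
  have c3: "\<And>x. c x = 0 \<or> c x = 1 \<or> c x = 2"
  proof - fix x have "c x < 3" by (rule c(1)) thus "c x = 0 \<or> c x = 1 \<or> c x = 2" by presburger qed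
  have WZ: "W \<subseteq> Z 0 \<union> Z 1 \<union> Z 2" unfolding Z_def using c3 by blast
  have "\<exists>i. \<not> bnd X EE (Z i)"
  proof (rule ccontr)
    assume "\<not> (\<exists>i. \<not> bnd X EE (Z i))"
    hence "bnd X EE (Z 0 \<union> Z 1 \<union> Z 2)" using bnd_Un[OF b] by simp
    thus False using WZ W(2) bnd_mono by blast
  qed
  then obtain i where i: "\<not> bnd X EE (Z i)" by blast
  have ZX: "Z i \<subseteq> X" using W unfolding Z_def by blast
  have "h ` Z i \<subseteq> X - Z i"
  proof
    fix y assume "y \<in> h ` Z i" then obtain x where x: "x \<in> Z i" "y = h x" by blast
    hence "x \<in> W" "c x = i" unfolding Z_def by auto
    hence "g x = y" "c y \<noteq> i" using x c(2)[of x] unfolding g_def by auto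
    thus "y \<in> X - Z i" using h \<open>x\<in>W\<close> x unfolding Z_def by auto
  qed
  hence "bnd X EE (h ` Z i)" using bnd_mono ud_compl[OF b u ZX i] by blast
  moreover have "Z i \<subseteq> W" unfolding Z_def by blast
  ultimately show ?thesis using i by blast
qed




lemma pow_ent_mem: "(\<forall>i<n. Es i \<in> EE) \<Longrightarrow>
  {(x, y). x \<in> power_carrier X n \<and> y \<in> power_carrier X n \<and> (\<forall>i<n. (x i, y i) \<in> Es i)} \<in> power_ent X EE n"
  unfolding power_ent_def by blast

lemma pow_bnd_coord:
  assumes b: "ballean X EE" and n: "0 < n" and S: "bounded_in (power_carrier X n) (power_ent X EE n) S"
  shows "\<exists>M. bnd X EE M \<and> (\<forall>z\<in>S. \<forall>i<n. z i \<in> M)"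
proof -
  obtain E x0 where E: "E \<in> power_ent X EE n" "x0 \<in> power_carrier X n" "S \<subseteq> E``{x0}"
    using S unfolding bounded_in_def by blast
  obtain Es where Es: "\<forall>i<n. Es i \<in> EE"
    "E = {(x, y). x \<in> power_carrier X n \<and> y \<in> power_carrier X n \<and> (\<forall>i<n. (x i, y i) \<in> Es i)}"
    using E(1) unfolding power_ent_def by blast
  have x0X: "\<And>i. i < n \<Longrightarrow> x0 i \<in> X" using E(2) unfolding power_carrier_def by auto
  define M where "M = (\<Union>i\<in>{..<n}. Es i `` {x0 i})"
  have "bnd X EE M" unfolding M_def
    by (rule bnd_UN[OF b x0X[OF n]]) (auto intro!: bnd_image[OF b] bnd_single[OF b] x0X Es(1)[rule_format])
  moreover have "\<forall>z\<in>S. \<forall>i<n. z i \<in> M"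
  proof (intro ballI allI impI)
    fix z i assume z: "z \<in> S" and i: "i < n"
    hence "(x0, z) \<in> E" using E(3) by blast
    hence "(x0 i, z i) \<in> Es i" using Es(2) i by blast
    thus "z i \<in> M" unfolding M_def using i by blast
  qed
  ultimately show ?thesis by blast
qed

lemma pow_bnd_intro:
  assumes b: "ballean X EE" and a: "a \<in> X" and S: "S \<subseteq> power_carrier X n" and M: "bnd X EE M"
    and z: "\<forall>z\<in>S. \<forall>i<n. z i \<in> M"
  shows "bounded_in (power_carrier X n) (power_ent X EE n) S"
proof -
  have "bnd X EE (M \<union> {a})" using bnd_Un[OF b M bnd_single[OF b a]] .
  then obtain D where D: "D \<in> EE" "Id_on X \<union> (M \<union> {a}) \<times> (M \<union> {a}) \<subseteq> D" using bnd_ent[OF b] by blast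
  define E where "E = {(x, y). x \<in> power_carrier X n \<and> y \<in> power_carrier X n \<and> (\<forall>i<n. (x i, y i) \<in> D)}"
  have E: "E \<in> power_ent X EE n" unfolding E_def using pow_ent_mem[of n "\<lambda>_. D"] D(1) by blast
  define x0 where "x0 = (\<lambda>i. if i < n then a else undefined)"
  have x0: "x0 \<in> power_carrier X n" unfolding x0_def power_carrier_def using a by (auto split: if_splits)
  have "S \<subseteq> E``{x0}"
  proof
    fix y assume y: "y \<in> S"
    have "\<forall>i<n. (x0 i, y i) \<in> D" using z y D(2) unfolding x0_def by auto
    thus "y \<in> E``{x0}" unfolding E_def using x0 y S by blast
  qed
  thus ?thesis unfolding bounded_in_def using E x0 by blast
qed

theorem part1:
  fixes X :: "'a set" and EE :: "('a \<times> 'a) set set" and n :: nat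
  assumes b: "ballean X EE" and u: "ultradiscrete X EE" and n: "n \<ge> 2"
  shows "\<not> normal_ballean (power_carrier X n) (power_ent X EE n)"
proof
  assume nb: "normal_ballean (power_carrier X n) (power_ent X EE n)"
  obtain a where a: "a \<in> X" using ud_nonempty[OF b u] by blast
  have n0: "0 < n" using n by simp
  define P where "P = (\<lambda>t y. (\<lambda>i::nat. if i = 0 then t else if i = 1 then y else if i < n then a else undefined))"
  have Pc: "\<And>t y. t \<in> X \<Longrightarrow> y \<in> X \<Longrightarrow> P t y \<in> power_carrier X n"
    unfolding P_def power_carrier_def using a n by (auto split: if_splits)
  have P0: "\<And>t y. P t y 0 = t" and P1: "\<And>t y. P t y 1 = y" and P1': "\<And>t y. P t y (Suc 0) = y"
    unfolding P_def by auto
  have Pa: "\<And>t y i. i < n \<Longrightarrow> i \<noteq> 0 \<Longrightarrow> i \<noteq> 1 \<Longrightarrow> P t y i = a" unfolding P_def by auto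
  define A where "A = (\<lambda>t. P t a) ` X"
  define B where "B = (\<lambda>s. P a s) ` X"
  have AC: "A \<subseteq> power_carrier X n" and BC: "B \<subseteq> power_carrier X n" unfolding A_def B_def using Pc a by auto
  have disj: "asymp_disjoint (power_carrier X n) (power_ent X EE n) A B"
    unfolding asymp_disjoint_def
  proof
    fix E assume E: "E \<in> power_ent X EE n"
    obtain Es where Es: "\<forall>i<n. Es i \<in> EE"
      "E = {(x, y). x \<in> power_carrier X n \<and> y \<in> power_carrier X n \<and> (\<forall>i<n. (x i, y i) \<in> Es i)}"
      using E unfolding power_ent_def by blast
    define M where "M = (\<Union>i\<in>{..<n}. Es i `` {a})"
    have M: "bnd X EE M" unfolding M_def
      by (rule bnd_UN[OF b a]) (auto intro!: bnd_image[OF b] bnd_single[OF b] a Es(1)[rule_format])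
    have sub: "E``A \<inter> E``B \<subseteq> power_carrier X n" using Es(2) by blast
    have "\<forall>z\<in>E``A \<inter> E``B. \<forall>i<n. z i \<in> M"
    proof (intro ballI allI impI)
      fix z i assume z: "z \<in> E``A \<inter> E``B" and i: "i < n"
      then obtain t s where ts: "(P t a, z) \<in> E" "(P a s, z) \<in> E" unfolding A_def B_def by blast
      hence e1: "(P t a i, z i) \<in> Es i" and e2: "(P a s i, z i) \<in> Es i" using Es(2) i by blast+
      show "z i \<in> M"
      proof (cases "i = 0")
        case True hence "(a, z i) \<in> Es i" using e2 P0 by simp
        thus ?thesis unfolding M_def using i by blast
      next
        case False
        hence "P t a i = a" using i P1 Pa by (cases "i = 1") auto
        hence "(a, z i) \<in> Es i" using e1 by simp
        thus ?thesis unfolding M_def using i by blast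
      qed
    qed
    thus "bounded_in (power_carrier X n) (power_ent X EE n) (E``A \<inter> E``B)"
      using pow_bnd_intro[OF b a sub M] by blast
  qed
  then obtain U V where UV: "U \<subseteq> power_carrier X n" "V \<subseteq> power_carrier X n"
    "asymp_nbhd (power_carrier X n) (power_ent X EE n) U A"
    "asymp_nbhd (power_carrier X n) (power_ent X EE n) V B" "U \<inter> V = {}"
    using nb[unfolded normal_ballean_def, rule_format, OF AC BC disj] by blast
  have entL: "\<And>L. bnd X EE L \<Longrightarrow> \<exists>E\<in>power_ent X EE n. \<forall>x y. x \<in> power_carrier X n \<longrightarrow> y \<in> power_carrier X n
      \<longrightarrow> (\<forall>i<n. x i = y i \<or> (x i \<in> L \<union> {a} \<and> y i \<in> L \<union> {a})) \<longrightarrow> (x,y) \<in> E"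
  proof -
    fix L assume L: "bnd X EE L"
    have "bnd X EE (L \<union> {a})" using bnd_Un[OF b L bnd_single[OF b a]] .
    then obtain D where D: "D \<in> EE" "Id_on X \<union> (L \<union> {a}) \<times> (L \<union> {a}) \<subseteq> D" using bnd_ent[OF b] by blast
    define E where "E = {(x, y). x \<in> power_carrier X n \<and> y \<in> power_carrier X n \<and> (\<forall>i<n. (x i, y i) \<in> D)}"
    have E: "E \<in> power_ent X EE n" unfolding E_def using pow_ent_mem[of n "\<lambda>_. D"] D(1) by blast
    show "?thesis L"
    proof (intro bexI[OF _ E] allI impI)
      fix x y assume xy: "x \<in> power_carrier X n" "y \<in> power_carrier X n"
        and c: "\<forall>i<n. x i = y i \<or> (x i \<in> L \<union> {a} \<and> y i \<in> L \<union> {a})"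
      have "\<forall>i<n. (x i, y i) \<in> D"
      proof (intro allI impI)
        fix i assume i: "i < n"
        have "x i \<in> X" using xy(1) i unfolding power_carrier_def by auto
        have "x i = y i \<or> (x i \<in> L \<union> {a} \<and> y i \<in> L \<union> {a})" using c i by simp
        thus "(x i, y i) \<in> D"
        proof
          assume "x i = y i" thus ?thesis using \<open>x i \<in> X\<close> D(2) by auto
        next
          assume "x i \<in> L \<union> {a} \<and> y i \<in> L \<union> {a}"
          hence "(x i, y i) \<in> (L \<union> {a}) \<times> (L \<union> {a})" by blast
          thus ?thesis using D(2) by blast
        qed
      qed
      thus "(x, y) \<in> E" unfolding E_def using xy by blast
    qed
  qed
  have Ufact: "\<And>L. bnd X EE L \<Longrightarrow> \<exists>M. bnd X EE M \<and> (\<forall>t\<in>X. \<forall>y\<in>L. t \<notin> M \<longrightarrow> P t y \<in> U)"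
  proof -
    fix L assume L: "bnd X EE L"
    have LX: "L \<subseteq> X" using bnd_X[OF b L] .
    obtain E where E: "E \<in> power_ent X EE n" and Ep: "\<forall>x y. x \<in> power_carrier X n \<longrightarrow> y \<in> power_carrier X n
      \<longrightarrow> (\<forall>i<n. x i = y i \<or> (x i \<in> L \<union> {a} \<and> y i \<in> L \<union> {a})) \<longrightarrow> (x,y) \<in> E" using entL[OF L] by blast
    have "bounded_in (power_carrier X n) (power_ent X EE n) (E``A - U)" using UV(3) E unfolding asymp_nbhd_def by blast
    then obtain M where M: "bnd X EE M" "\<forall>z\<in>E``A - U. \<forall>i<n. z i \<in> M" using pow_bnd_coord[OF b n0] by blast
    have "\<forall>t\<in>X. \<forall>y\<in>L. t \<notin> M \<longrightarrow> P t y \<in> U"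
    proof (intro ballI impI)
      fix t y assume t: "t \<in> X" and y: "y \<in> L" and tM: "t \<notin> M"
      have "\<forall>i<n. P t a i = P t y i \<or> (P t a i \<in> L \<union> {a} \<and> P t y i \<in> L \<union> {a})"
      proof (intro allI impI)
        fix i assume i: "i < n"
        show "P t a i = P t y i \<or> (P t a i \<in> L \<union> {a} \<and> P t y i \<in> L \<union> {a})"
        proof (cases "i = 0")
          case True thus ?thesis by (simp add: P0)
        next
          case False note f = this
          show ?thesis
          proof (cases "i = 1")
            case True thus ?thesis using y by (simp add: P1 P1')
          next
            case False thus ?thesis using f Pa[OF i] by simp
          qed
        qed
      qed
      moreover have "P t y \<in> power_carrier X n" using Pc t y LX by blast
      ultimately have "(P t a, P t y) \<in> E" using Ep[rule_format, OF Pc[OF t a]] by blast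
      hence "P t y \<in> E``A" unfolding A_def using t by blast
      moreover have "P t y 0 \<notin> M" using tM P0 by simp
      ultimately show "P t y \<in> U" using M(2)[rule_format, of "P t y" 0] n0 by blast
    qed
    thus "?thesis L" using M(1) by blast
  qed
  have Vfact: "\<And>L. bnd X EE L \<Longrightarrow> \<exists>M. bnd X EE M \<and> (\<forall>s\<in>X. \<forall>x\<in>L. s \<notin> M \<longrightarrow> P x s \<in> V)"
  proof -
    fix L assume L: "bnd X EE L"
    have LX: "L \<subseteq> X" using bnd_X[OF b L] .
    obtain E where E: "E \<in> power_ent X EE n" and Ep: "\<forall>x y. x \<in> power_carrier X n \<longrightarrow> y \<in> power_carrier X n
      \<longrightarrow> (\<forall>i<n. x i = y i \<or> (x i \<in> L \<union> {a} \<and> y i \<in> L \<union> {a})) \<longrightarrow> (x,y) \<in> E" using entL[OF L] by blast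
    have "bounded_in (power_carrier X n) (power_ent X EE n) (E``B - V)" using UV(4) E unfolding asymp_nbhd_def by blast
    then obtain M where M: "bnd X EE M" "\<forall>z\<in>E``B - V. \<forall>i<n. z i \<in> M" using pow_bnd_coord[OF b n0] by blast
    have "\<forall>s\<in>X. \<forall>x\<in>L. s \<notin> M \<longrightarrow> P x s \<in> V"
    proof (intro ballI impI)
      fix s x assume s: "s \<in> X" and x: "x \<in> L" and sM: "s \<notin> M"
      have "\<forall>i<n. P a s i = P x s i \<or> (P a s i \<in> L \<union> {a} \<and> P x s i \<in> L \<union> {a})"
      proof (intro allI impI)
        fix i assume i: "i < n"
        show "P a s i = P x s i \<or> (P a s i \<in> L \<union> {a} \<and> P x s i \<in> L \<union> {a})"
        proof (cases "i = 0")
          case True thus ?thesis using x by (simp add: P0)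
        next
          case False note f = this
          show ?thesis
          proof (cases "i = 1")
            case True thus ?thesis by (simp add: P1 P1')
          next
            case False thus ?thesis using f Pa[OF i] by simp
          qed
        qed
      qed
      moreover have "P x s \<in> power_carrier X n" using Pc s x LX by blast
      ultimately have "(P a s, P x s) \<in> E" using Ep[rule_format, OF Pc[OF a s]] by blast
      hence "P x s \<in> E``B" unfolding B_def using s by blast
      moreover have "P x s 1 \<notin> M" using sM P1 by simp
      moreover have "1 < n" using n by simp
      ultimately show "P x s \<in> V" using M(2)[rule_format, of "P x s" 1] by blast
    qed
    thus "?thesis L" using M(1) by blast
  qed
  define r where "r = (\<lambda>x. SOME M. bnd X EE M \<and> (\<forall>s\<in>X. s \<notin> M \<longrightarrow> P x s \<in> V))"
  have r: "\<And>x. x \<in> X \<Longrightarrow> bnd X EE (r x) \<and> (\<forall>s\<in>X. s \<notin> r x \<longrightarrow> P x s \<in> V)"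
  proof -
    fix x assume x: "x \<in> X"
    have "\<exists>M. bnd X EE M \<and> (\<forall>s\<in>X. s \<notin> M \<longrightarrow> P x s \<in> V)" using Vfact[OF bnd_single[OF b x]] by blast
    thus "?thesis x" unfolding r_def by (rule someI_ex)
  qed
  define h where "h = (\<lambda>x. SOME s. s \<in> X \<and> s \<notin> r x \<and> s \<noteq> x)"
  have h: "\<And>x. x \<in> X \<Longrightarrow> h x \<in> X \<and> h x \<notin> r x \<and> h x \<noteq> x"
  proof -
    fix x assume x: "x \<in> X"
    have "\<exists>s. s \<in> X \<and> s \<notin> r x \<and> s \<noteq> x"
    proof (rule ccontr)
      assume "\<not> ?thesis" hence "X \<subseteq> r x \<union> {x}" by blast
      moreover have "bnd X EE (r x \<union> {x})" using bnd_Un[OF b conjunct1[OF r[OF x]] bnd_single[OF b x]] .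
      ultimately show False using ud_notX[OF u] bnd_mono by blast
    qed
    thus "?thesis x" unfolding h_def by (rule someI_ex)
  qed
  obtain Z where Z: "Z \<subseteq> X" "\<not> bnd X EE Z" "bnd X EE (h ` Z)"
    using katetov[OF b u subset_refl ud_notX[OF u], of h] h by blast
  obtain M where M: "bnd X EE M" "\<forall>t\<in>X. \<forall>y\<in>h ` Z. t \<notin> M \<longrightarrow> P t y \<in> U" using Ufact[OF Z(3)] by blast
  obtain t where t: "t \<in> Z" "t \<notin> M" using Z(2) M(1) bnd_mono by blast
  have tX: "t \<in> X" using t Z(1) by blast
  have "P t (h t) \<in> U" using M(2) t tX by blast
  moreover have "P t (h t) \<in> V" using r[OF tX] h[OF tX] by blast
  ultimately show False using UV(5) by blast
qed



definition hat :: "'a set \<Rightarrow> ('a \<times> 'a) set set \<Rightarrow> ('a \<times> 'a) set \<Rightarrow> ('a set \<times> 'a set) set" where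
  "hat X EE E = {(A, B). A \<in> hyper_carrier X EE \<and> B \<in> hyper_carrier X EE \<and> A \<subseteq> E `` B \<and> B \<subseteq> E `` A}"

lemma hent_eq: "hypersym_ent X EE n = (\<lambda>E. (hypersym_carrier X EE n \<times> hypersym_carrier X EE n) \<inter> hat X EE E) ` EE"
  unfolding hypersym_ent_def sub_ent_def hyper_ent_def hat_def by (simp add: image_image)

lemma H_mem: "C \<in> hypersym_carrier X EE n \<longleftrightarrow> bnd X EE C \<and> C \<noteq> {} \<and> finite C \<and> card C \<le> n"
  unfolding hypersym_carrier_def hyper_carrier_def by blast

lemma HX: "ballean X EE \<Longrightarrow> C \<in> hypersym_carrier X EE n \<Longrightarrow> C \<subseteq> X"
  unfolding H_mem using bnd_X by blast

lemma hat_mem: "C \<in> hypersym_carrier X EE n \<Longrightarrow> D \<in> hypersym_carrier X EE n \<Longrightarrow> C \<subseteq> E``D \<Longrightarrow> D \<subseteq> E``C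
  \<Longrightarrow> (C, D) \<in> (hypersym_carrier X EE n \<times> hypersym_carrier X EE n) \<inter> hat X EE E"
  unfolding hat_def hypersym_carrier_def by blast

lemma hbnd_intro:
  assumes b: "ballean X EE" and x0: "x0 \<in> X" and n: "1 \<le> n" and S: "S \<subseteq> hypersym_carrier X EE n"
    and U: "bnd X EE (\<Union>S)"
  shows "bounded_in (hypersym_carrier X EE n) (hypersym_ent X EE n) S"
proof -
  define H where "H = hypersym_carrier X EE n"
  obtain C0 where C0: "C0 \<in> H" "S \<noteq> {} \<Longrightarrow> C0 \<in> S"
  proof (cases "S = {}")
    case True
    have "{x0} \<in> H" unfolding H_def H_mem using bnd_single[OF b x0] n by auto
    thus ?thesis using that True by blast
  next
    case False then obtain C where "C \<in> S" by blast
    thus ?thesis using that S unfolding H_def by blast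
  qed
  have C0b: "bnd X EE C0" and C0ne: "C0 \<noteq> {}" using C0(1) unfolding H_def H_mem by auto
  define K where "K = \<Union>S \<union> C0"
  have "bnd X EE K" unfolding K_def using bnd_Un[OF b U C0b] .
  then obtain E where E: "E \<in> EE" "Id_on X \<union> K \<times> K \<subseteq> E" using bnd_ent[OF b] by blast
  have Ein: "(H \<times> H) \<inter> hat X EE E \<in> hypersym_ent X EE n" unfolding hent_eq H_def using E(1) by blast
  have "S \<subseteq> ((H \<times> H) \<inter> hat X EE E) `` {C0}"
  proof
    fix D assume D: "D \<in> S"
    have DH: "D \<in> H" using D S unfolding H_def by blast
    hence Dne: "D \<noteq> {}" unfolding H_def H_mem by blast
    have DK: "D \<subseteq> K" "C0 \<subseteq> K" using D unfolding K_def by blast+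
    have "C0 \<subseteq> E``D"
    proof
      fix c assume c: "c \<in> C0" obtain d where "d \<in> D" using Dne by blast
      hence "(d, c) \<in> K \<times> K" using c DK by blast
      thus "c \<in> E``D" using E(2) \<open>d\<in>D\<close> by blast
    qed
    moreover have "D \<subseteq> E``C0"
    proof
      fix d assume d: "d \<in> D" obtain c where "c \<in> C0" using C0ne by blast
      hence "(c, d) \<in> K \<times> K" using d DK by blast
      thus "d \<in> E``C0" using E(2) \<open>c\<in>C0\<close> by blast
    qed
    ultimately have "(C0, D) \<in> (H \<times> H) \<inter> hat X EE E" using hat_mem C0(1) DH unfolding H_def by blast
    thus "D \<in> ((H \<times> H) \<inter> hat X EE E) `` {C0}" by blast
  qed
  thus ?thesis unfolding bounded_in_def H_def[symmetric] using Ein C0(1) by blast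
qed

lemma hbnd_elim:
  assumes b: "ballean X EE" and S: "bounded_in (hypersym_carrier X EE n) (hypersym_ent X EE n) S"
  shows "bnd X EE (\<Union>S)"
proof -
  obtain E' C0 where E': "E' \<in> hypersym_ent X EE n" "C0 \<in> hypersym_carrier X EE n" "S \<subseteq> E'``{C0}"
    using S unfolding bounded_in_def by blast
  obtain E where E: "E \<in> EE" "E' = (hypersym_carrier X EE n \<times> hypersym_carrier X EE n) \<inter> hat X EE E"
    using E'(1) unfolding hent_eq by blast
  have "\<Union>S \<subseteq> E``C0"
  proof
    fix x assume "x \<in> \<Union>S" then obtain D where D: "D \<in> S" "x \<in> D" by blast
    hence "(C0, D) \<in> hat X EE E" using E'(3) E(2) by blast
    hence "D \<subseteq> E``C0" unfolding hat_def by blast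
    thus "x \<in> E``C0" using D by blast
  qed
  moreover have "bnd X EE C0" using E'(2) unfolding H_mem by blast
  ultimately show ?thesis using bnd_image[OF b _ E(1)] bnd_mono by blast
qed

definition shadow :: "'a set set \<Rightarrow> 'a set \<Rightarrow> 'a set" where
  "shadow AA K = {y. \<exists>A\<in>AA. A - K = {y}}"

lemma card2_other: "finite A \<Longrightarrow> 2 \<le> card A \<Longrightarrow> x \<in> A \<Longrightarrow> \<exists>y\<in>A. y \<noteq> x"
proof (rule ccontr)
  assume "finite A" "2 \<le> card A" "x \<in> A" "\<not> (\<exists>y\<in>A. y \<noteq> x)"
  hence "A = {x}" by blast
  thus False using \<open>2 \<le> card A\<close> by simp
qed

lemma two_card: "finite A \<Longrightarrow> x \<in> A \<Longrightarrow> y \<in> A \<Longrightarrow> x \<noteq> y \<Longrightarrow> 2 \<le> card A"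
proof -
  assume "finite A" "x \<in> A" "y \<in> A" "x \<noteq> y"
  hence "card {x, y} \<le> card A" by (intro card_mono) auto
  thus "2 \<le> card A" using \<open>x \<noteq> y\<close> by simp
qed

lemma shadow_lemma:
  assumes b: "ballean X EE" and u: "ultradiscrete X EE"
  shows "(\<forall>A\<in>AA. finite A \<and> A \<subseteq> X \<and> 2 \<le> card A \<and> card A \<le> m) \<Longrightarrow> \<not> bnd X EE (\<Union>AA)
    \<Longrightarrow> \<exists>K. bnd X EE K \<and> \<not> bnd X EE (shadow AA K)"
proof (induction m arbitrary: AA)
  case 0
  hence "AA = {}" by fastforce
  moreover obtain x0 where "x0 \<in> X" using ud_nonempty[OF b u] by blast
  ultimately show ?case using 0 bnd_empty[OF b] by auto
next
  case (Suc m)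
  define W where "W = \<Union>AA"
  have WX: "W \<subseteq> X" using Suc.prems(1) unfolding W_def by blast
  define Ax where "Ax = (\<lambda>x. SOME A. A \<in> AA \<and> x \<in> A)"
  have Ax: "\<And>x. x \<in> W \<Longrightarrow> Ax x \<in> AA \<and> x \<in> Ax x"
  proof -
    fix x assume "x \<in> W" hence "\<exists>A. A \<in> AA \<and> x \<in> A" unfolding W_def by blast
    thus "Ax x \<in> AA \<and> x \<in> Ax x" unfolding Ax_def by (rule someI_ex)
  qed
  define h where "h = (\<lambda>x. SOME y. y \<in> Ax x \<and> y \<noteq> x)"
  have h: "\<And>x. x \<in> W \<Longrightarrow> h x \<in> Ax x \<and> h x \<noteq> x"
  proof -
    fix x assume x: "x \<in> W"
    have "\<exists>y. y \<in> Ax x \<and> y \<noteq> x" using card2_other[of "Ax x" x] Ax[OF x] Suc.prems(1) by blast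
    thus "h x \<in> Ax x \<and> h x \<noteq> x" unfolding h_def by (rule someI_ex)
  qed
  have hX: "\<And>x. x \<in> W \<Longrightarrow> h x \<in> X \<and> h x \<noteq> x" using h Ax Suc.prems(1) by blast
  obtain Z where Z: "Z \<subseteq> W" "\<not> bnd X EE Z" "bnd X EE (h ` Z)"
    using katetov[OF b u WX] hX Suc.prems(2) unfolding W_def by blast
  define K0 where "K0 = h ` Z"
  define Z' where "Z' = Z - K0"
  have Z': "\<not> bnd X EE Z'"
  proof
    assume "bnd X EE Z'"
    hence "bnd X EE (Z' \<union> K0)" using bnd_Un[OF b] Z(3) unfolding K0_def by blast
    moreover have "Z \<subseteq> Z' \<union> K0" unfolding Z'_def by blast
    ultimately show False using Z(2) bnd_mono by blast
  qed
  define Z1 where "Z1 = {x\<in>Z'. Ax x - K0 = {x}}"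
  show ?case
  proof (cases "bnd X EE Z1")
    case False
    have "Z1 \<subseteq> shadow AA K0"
    proof
      fix x assume x: "x \<in> Z1"
      hence "x \<in> W" unfolding Z1_def Z'_def using Z(1) by blast
      thus "x \<in> shadow AA K0" using x Ax unfolding Z1_def shadow_def by blast
    qed
    hence "\<not> bnd X EE (shadow AA K0)" using False bnd_mono by blast
    moreover have "bnd X EE K0" using Z(3) unfolding K0_def .
    ultimately show ?thesis by blast
  next
    case True
    define Z2 where "Z2 = Z' - Z1"
    have Z2: "\<not> bnd X EE Z2"
    proof
      assume "bnd X EE Z2"
      hence "bnd X EE (Z2 \<union> Z1)" using bnd_Un[OF b _ True] by blast
      moreover have "Z' \<subseteq> Z2 \<union> Z1" unfolding Z2_def by blast
      ultimately show False using Z' bnd_mono by blast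
    qed
    define AA2 where "AA2 = (\<lambda>x. Ax x - K0) ` Z2"
    have props: "\<forall>A\<in>AA2. finite A \<and> A \<subseteq> X \<and> 2 \<le> card A \<and> card A \<le> m"
    proof
      fix A assume "A \<in> AA2"
      then obtain x where x: "x \<in> Z2" "A = Ax x - K0" unfolding AA2_def by blast
      have xW: "x \<in> W" and xK: "x \<notin> K0" and xn: "Ax x - K0 \<noteq> {x}" and xZ: "x \<in> Z"
        using x(1) Z(1) unfolding Z2_def Z1_def Z'_def by auto
      have AxA: "Ax x \<in> AA" "x \<in> Ax x" using Ax[OF xW] by auto
      have fin: "finite (Ax x)" "card (Ax x) \<le> Suc m" "Ax x \<subseteq> X" using Suc.prems(1) AxA(1) by auto
      have hx: "h x \<in> Ax x" "h x \<in> K0" using h[OF xW] xZ unfolding K0_def by auto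
      have xA: "x \<in> A" using x(2) AxA xK by blast
      then obtain y where y: "y \<in> A" "y \<noteq> x" using xn x(2) by blast
      have "2 \<le> card A" using two_card[of A x y] fin(1) x(2) xA y by auto
      moreover have "A \<subseteq> Ax x - {h x}" using x(2) hx by blast
      hence "card A \<le> card (Ax x - {h x})" using fin(1) by (intro card_mono) auto
      hence "card A \<le> m" using fin(1,2) hx(1) by (simp add: card_Diff_singleton)
      ultimately show "finite A \<and> A \<subseteq> X \<and> 2 \<le> card A \<and> card A \<le> m"
        using fin x(2) by auto
    qed
    have "Z2 \<subseteq> \<Union>AA2"
    proof
      fix x assume x: "x \<in> Z2"
      hence "x \<in> W" "x \<notin> K0" using Z(1) unfolding Z2_def Z'_def by auto
      hence "x \<in> Ax x - K0" using Ax by blast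
      thus "x \<in> \<Union>AA2" unfolding AA2_def using x by blast
    qed
    hence "\<not> bnd X EE (\<Union>AA2)" using Z2 bnd_mono by blast
    then obtain K' where K': "bnd X EE K'" "\<not> bnd X EE (shadow AA2 K')" using Suc.IH[OF props] by blast
    have "shadow AA2 K' \<subseteq> shadow AA (K0 \<union> K')"
    proof
      fix y assume "y \<in> shadow AA2 K'"
      then obtain x where x: "x \<in> Z2" "Ax x - K0 - K' = {y}" unfolding shadow_def AA2_def by blast
      have "x \<in> W" using x(1) Z(1) unfolding Z2_def Z'_def by auto
      hence "Ax x \<in> AA" using Ax by blast
      moreover have "Ax x - (K0 \<union> K') = {y}" using x(2) by (metis Diff_Un Diff_Int2 Diff_Diff_Int inf_sup_aci(1) diff_eq Int_assoc Un_commute Diff_eq compl_sup inf_assoc)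
      ultimately show "y \<in> shadow AA (K0 \<union> K')" unfolding shadow_def by blast
    qed
    hence "\<not> bnd X EE (shadow AA (K0 \<union> K'))" using K'(2) bnd_mono by blast
    moreover have "bnd X EE (K0 \<union> K')" using bnd_Un[OF b _ K'(1)] Z(3) unfolding K0_def by blast
    ultimately show ?thesis by blast
  qed
qed

lemma adisj_sym: "asymp_disjoint Y F A B \<Longrightarrow> asymp_disjoint Y F B A"
  unfolding asymp_disjoint_def by (simp add: Int_commute)

lemma sep:
  assumes b: "ballean X EE" and u: "ultradiscrete X EE" and n: "1 \<le> n"
    and AH: "AA \<subseteq> hypersym_carrier X EE n" and BH: "BB \<subseteq> hypersym_carrier X EE n"
    and d: "asymp_disjoint (hypersym_carrier X EE n) (hypersym_ent X EE n) AA BB"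
    and B2: "bnd X EE (\<Union>{B\<in>BB. 2 \<le> card B})"
  shows "\<exists>U V. U \<subseteq> hypersym_carrier X EE n \<and> V \<subseteq> hypersym_carrier X EE n \<and>
    asymp_nbhd (hypersym_carrier X EE n) (hypersym_ent X EE n) U AA \<and>
    asymp_nbhd (hypersym_carrier X EE n) (hypersym_ent X EE n) V BB \<and> U \<inter> V = {}"
proof -
  define H where "H = hypersym_carrier X EE n"
  obtain x0 where x0: "x0 \<in> X" using ud_nonempty[OF b u] by blast
  have nV: "asymp_nbhd H (hypersym_ent X EE n) BB BB" unfolding asymp_nbhd_def
  proof
    fix E' assume "E' \<in> hypersym_ent X EE n"
    then obtain E where E: "E \<in> EE" "E' = (H \<times> H) \<inter> hat X EE E" unfolding hent_eq H_def by blast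
    obtain K where K: "bnd X EE K" "E \<subseteq> Id_on X \<union> K \<times> K" using ud_ent[OF b u E(1)] by blast
    have sub: "E'``BB - BB \<subseteq> H" using E(2) by blast
    have "\<Union>(E'``BB - BB) \<subseteq> K \<union> \<Union>{B\<in>BB. 2 \<le> card B}"
    proof
      fix c assume "c \<in> \<Union>(E'``BB - BB)"
      then obtain C B where CB: "c \<in> C" "B \<in> BB" "(B, C) \<in> E'" "C \<notin> BB" by blast
      have CE: "C \<subseteq> E``B" and BE: "B \<subseteq> E``C" and CH: "C \<in> H" and BH': "B \<in> H"
        using CB(3) E(2) unfolding hat_def by auto
      show "c \<in> K \<union> \<Union>{B\<in>BB. 2 \<le> card B}"
      proof (cases "c \<in> K")
        case True thus ?thesis by blast
      next
        case cK: False
        obtain b0 where b0: "b0 \<in> B" "(b0, c) \<in> E" using CE CB(1) by blast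
        hence cb: "c = b0" using K(2) cK by blast
        show ?thesis
        proof (cases "2 \<le> card B")
          case True thus ?thesis using CB(2) b0 cb by blast
        next
          case False
          have fB: "finite B" "B \<noteq> {}" using BH' unfolding H_def H_mem by auto
          have "B = {b0}"
          proof (rule ccontr)
            assume "B \<noteq> {b0}" then obtain b1 where "b1 \<in> B" "b1 \<noteq> b0" using b0 by blast
            thus False using two_card[OF fB(1) b0(1)] False by blast
          qed
          have "C = {b0}"
          proof -
            have "C \<subseteq> {b0}"
            proof
              fix c' assume c': "c' \<in> C"
              then obtain b' where "b' \<in> B" "(b', c') \<in> E" using CE by blast
              hence "(b0, c') \<in> E" using \<open>B = {b0}\<close> by blast
              hence "c' = b0 \<or> b0 \<in> K" using K(2) by blast
              thus "c' \<in> {b0}" using cK cb by blast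
            qed
            moreover have "C \<noteq> {}" using CH unfolding H_def H_mem by blast
            ultimately show ?thesis by blast
          qed
          hence "C = B" using \<open>B = {b0}\<close> by simp
          thus ?thesis using CB by blast
        qed
      qed
    qed
    moreover have "bnd X EE (K \<union> \<Union>{B\<in>BB. 2 \<le> card B})" using bnd_Un[OF b K(1) B2] .
    ultimately have "bnd X EE (\<Union>(E'``BB - BB))" using bnd_mono by blast
    thus "bounded_in H (hypersym_ent X EE n) (E'``BB - BB)"
      using hbnd_intro[OF b x0 n] sub unfolding H_def by blast
  qed
  have nU: "asymp_nbhd H (hypersym_ent X EE n) (H - BB) AA" unfolding asymp_nbhd_def
  proof
    fix E' assume E'1: "E' \<in> hypersym_ent X EE n"
    then obtain E where E: "E \<in> EE" "E' = (H \<times> H) \<inter> hat X EE E" unfolding hent_eq H_def by blast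
    have "E'``AA - (H - BB) \<subseteq> E'``AA \<inter> E'``BB"
    proof
      fix C assume C: "C \<in> E'``AA - (H - BB)"
      hence CB: "C \<in> BB" using E(2) by blast
      hence CH: "C \<in> H" using BH unfolding H_def by blast
      hence "C \<subseteq> X" using HX[OF b] unfolding H_def by blast
      hence "C \<subseteq> E``C" using bl_refl[OF b E(1)] by blast
      hence "(C, C) \<in> E'" using E(2) hat_mem CH unfolding H_def by blast
      thus "C \<in> E'``AA \<inter> E'``BB" using C CB by blast
    qed
    moreover have "bounded_in H (hypersym_ent X EE n) (E'``AA \<inter> E'``BB)"
      using d E'1 unfolding asymp_disjoint_def H_def by blast
    ultimately show "bounded_in H (hypersym_ent X EE n) (E'``AA - (H - BB))" using bnd_mono by blast
  qed
  show ?thesis using nU nV BH unfolding H_def by blast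
qed

theorem part2:
  fixes X :: "'a set" and EE :: "('a \<times> 'a) set set" and n :: nat
  assumes b: "ballean X EE" and u: "ultradiscrete X EE" and n: "n \<ge> 2"
  shows "normal_ballean (hypersym_carrier X EE n) (hypersym_ent X EE n)"
  unfolding normal_ballean_def
proof (intro allI impI)
  fix AA BB assume AH: "AA \<subseteq> hypersym_carrier X EE n" and BH: "BB \<subseteq> hypersym_carrier X EE n"
    and d: "asymp_disjoint (hypersym_carrier X EE n) (hypersym_ent X EE n) AA BB"
  define H where "H = hypersym_carrier X EE n"
  have n1: "1 \<le> n" using n by simp
  have props: "\<And>CC. CC \<subseteq> H \<Longrightarrow> \<forall>A\<in>{A\<in>CC. 2 \<le> card A}. finite A \<and> A \<subseteq> X \<and> 2 \<le> card A \<and> card A \<le> n"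
  proof -
    fix CC assume CC: "CC \<subseteq> H"
    show "\<forall>A\<in>{A\<in>CC. 2 \<le> card A}. finite A \<and> A \<subseteq> X \<and> 2 \<le> card A \<and> card A \<le> n"
    proof
      fix A assume A: "A \<in> {A\<in>CC. 2 \<le> card A}"
      hence "A \<in> hypersym_carrier X EE n" using CC unfolding H_def by blast
      hence "bnd X EE A \<and> finite A \<and> card A \<le> n" unfolding H_mem by blast
      thus "finite A \<and> A \<subseteq> X \<and> 2 \<le> card A \<and> card A \<le> n" using A bnd_X[OF b] by blast
    qed
  qed
  have claim: "bnd X EE (\<Union>{A\<in>AA. 2 \<le> card A}) \<or> bnd X EE (\<Union>{B\<in>BB. 2 \<le> card B})"
  proof (rule ccontr)
    assume "\<not> ?thesis"
    hence nA: "\<not> bnd X EE (\<Union>{A\<in>AA. 2 \<le> card A})" and nB: "\<not> bnd X EE (\<Union>{B\<in>BB. 2 \<le> card B})" by auto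
    obtain K1 where K1: "bnd X EE K1" "\<not> bnd X EE (shadow {A\<in>AA. 2 \<le> card A} K1)"
      using shadow_lemma[OF b u props nA] AH unfolding H_def by blast
    obtain K2 where K2: "bnd X EE K2" "\<not> bnd X EE (shadow {B\<in>BB. 2 \<le> card B} K2)"
      using shadow_lemma[OF b u props nB] BH unfolding H_def by blast
    define Y1 where "Y1 = shadow {A\<in>AA. 2 \<le> card A} K1"
    define Y2 where "Y2 = shadow {B\<in>BB. 2 \<le> card B} K2"
    have Y1X: "Y1 \<subseteq> X"
    proof
      fix y assume "y \<in> Y1" then obtain A where "A \<in> AA" "A - K1 = {y}" unfolding Y1_def shadow_def by blast
      moreover hence "A \<subseteq> X" using AH HX[OF b] by blast
      ultimately show "y \<in> X" by blast
    qed
    have Y2X: "Y2 \<subseteq> X"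
    proof
      fix y assume "y \<in> Y2" then obtain B where "B \<in> BB" "B - K2 = {y}" unfolding Y2_def shadow_def by blast
      moreover hence "B \<subseteq> X" using BH HX[OF b] by blast
      ultimately show "y \<in> X" by blast
    qed
    define K where "K = K1 \<union> K2"
    have Kb: "bnd X EE K" unfolding K_def using bnd_Un[OF b K1(1) K2(1)] .
    define Y where "Y = Y1 \<inter> Y2 - K"
    have Y: "\<not> bnd X EE Y"
    proof
      assume "bnd X EE Y"
      moreover have "bnd X EE (X - Y1)" using ud_compl[OF b u Y1X] K1(2) unfolding Y1_def by simp
      moreover have "bnd X EE (X - Y2)" using ud_compl[OF b u Y2X] K2(2) unfolding Y2_def by simp
      ultimately have "bnd X EE (Y \<union> (X - Y1) \<union> (X - Y2) \<union> K)"
        using bnd_Un[OF b, OF bnd_Un[OF b, OF bnd_Un[OF b]]] Kb by blast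
      moreover have "X \<subseteq> Y \<union> (X - Y1) \<union> (X - Y2) \<union> K" unfolding Y_def by blast
      ultimately show False using ud_notX[OF u] bnd_mono by blast
    qed
    obtain E where E: "E \<in> EE" "Id_on X \<union> K \<times> K \<subseteq> E" using bnd_ent[OF b Kb] by blast
    define E' where "E' = (H \<times> H) \<inter> hat X EE E"
    have E'1: "E' \<in> hypersym_ent X EE n" unfolding E'_def hent_eq H_def using E(1) by blast
    have "bnd X EE (\<Union>(E'``AA \<inter> E'``BB))"
      using hbnd_elim[OF b] d E'1 unfolding asymp_disjoint_def by blast
    moreover have "Y \<subseteq> \<Union>(E'``AA \<inter> E'``BB)"
    proof
      fix y assume y: "y \<in> Y"
      then obtain A B where A: "A \<in> AA" "2 \<le> card A" "A - K1 = {y}" and B: "B \<in> BB" "2 \<le> card B" "B - K2 = {y}"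
        unfolding Y_def Y1_def Y2_def shadow_def by blast
      have yK: "y \<notin> K" using y unfolding Y_def by blast
      have AHH: "A \<in> H" and BHH: "B \<in> H" using A B AH BH unfolding H_def by blast+
      have AX: "A \<subseteq> X" and BX: "B \<subseteq> X" using AHH BHH HX[OF b] unfolding H_def by blast+
      obtain a' where a': "a' \<in> A" "a' \<in> K1"
      proof (rule ccontr)
        assume "\<not> thesis" hence "A \<subseteq> {y}" using A(3) that by blast
        hence "card A \<le> card {y}" by (intro card_mono) auto
        hence "card A \<le> 1" by simp
        thus False using A(2) by simp
      qed
      obtain b' where b': "b' \<in> B" "b' \<in> K2"
      proof (rule ccontr)
        assume "\<not> thesis" hence "B \<subseteq> {y}" using B(3) that by blast
        hence "card B \<le> card {y}" by (intro card_mono) auto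
        hence "card B \<le> 1" by simp
        thus False using B(2) by simp
      qed
      have yA: "y \<in> A" "y \<in> B" using A(3) B(3) by blast+
      have "A \<subseteq> E``B"
      proof
        fix x assume x: "x \<in> A"
        show "x \<in> E``B"
        proof (cases "x \<in> K1")
          case True hence "(b', x) \<in> K \<times> K" using b' unfolding K_def by blast
          thus ?thesis using E(2) b' by blast
        next
          case False hence "x = y" using x A(3) by blast
          hence "(y, x) \<in> E" using E(2) AX yA by blast
          thus ?thesis using yA by blast
        qed
      qed
      moreover have "B \<subseteq> E``A"
      proof
        fix x assume x: "x \<in> B"
        show "x \<in> E``A"
        proof (cases "x \<in> K2")
          case True hence "(a', x) \<in> K \<times> K" using a' unfolding K_def by blast
          thus ?thesis using E(2) a' by blast
        next
          case False hence "x = y" using x B(3) by blast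
          hence "(y, x) \<in> E" using E(2) AX yA by blast
          thus ?thesis using yA by blast
        qed
      qed
      ultimately have "(B, A) \<in> E'" unfolding E'_def using hat_mem[OF BHH[unfolded H_def] AHH[unfolded H_def]] unfolding H_def by blast
      moreover have "A \<subseteq> E``A" using AX bl_refl[OF b E(1)] by blast
      hence "(A, A) \<in> E'" unfolding E'_def using hat_mem[OF AHH[unfolded H_def] AHH[unfolded H_def]] unfolding H_def by blast
      ultimately have "A \<in> E'``AA \<inter> E'``BB" using A(1) B(1) by blast
      thus "y \<in> \<Union>(E'``AA \<inter> E'``BB)" using yA by blast
    qed
    ultimately show False using Y bnd_mono by blast
  qed
  thus "\<exists>U V. U \<subseteq> hypersym_carrier X EE n \<and> V \<subseteq> hypersym_carrier X EE n \<and>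
    asymp_nbhd (hypersym_carrier X EE n) (hypersym_ent X EE n) U AA \<and>
    asymp_nbhd (hypersym_carrier X EE n) (hypersym_ent X EE n) V BB \<and> U \<inter> V = {}"
  proof
    assume "bnd X EE (\<Union>{A\<in>AA. 2 \<le> card A})"
    then obtain U V where UV: "U \<subseteq> H" "V \<subseteq> H" "asymp_nbhd H (hypersym_ent X EE n) U BB"
      "asymp_nbhd H (hypersym_ent X EE n) V AA" "U \<inter> V = {}"
      using sep[OF b u n1 BH AH adisj_sym[OF d]] unfolding H_def by blast
    thus ?thesis unfolding H_def by blast
  next
    assume "bnd X EE (\<Union>{B\<in>BB. 2 \<le> card B})"
    thus ?thesis using sep[OF b u n1 AH BH d] by blast
  qed
qed

theorem theorem1p10:
  fixes X :: "'a set" and EE :: "('a \<times> 'a) set set" and n :: nat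
  assumes "ballean X EE"
    and "ultradiscrete X EE"
    and "n \<ge> 2"
  shows "\<not> normal_ballean (power_carrier X n) (power_ent X EE n)
         \<and> normal_ballean (hypersym_carrier X EE n) (hypersym_ent X EE n)"
  using part1[OF assms] part2[OF assms] by blast

end
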